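(* Let $\Sigma=(X,U,F)$ be a system and $Q\subset X$ a controlled invariant set. If $K\subset Q$ and $K=\bigcup_{i=1}^m K_i$ with nonempty $K_1,\dots,K_m$, then \[h_{inv}(K,Q)=\max_{i=1,\ldots,m}h_{inv}(K_i,Q).\]
   Context: A system is a triple $\Sigma=(X,U,F)$ where $X,U$ are nonempty sets and $F:X\times U\rightrightarrows X$ is a set-valued map with $F(x,u)\neq\emptyset$ for all $(x,u)$. For $A\subset X$ and $u\in U$, $F(A,u)=\bigcup_{x\in A}F(x,u)$. A set $Q\subset X$ is controlled invariant if for every $x\in Q$ there is $u\in U$ with $F(x,u)\subset Q$. For $u\in U$ put $Q_u=\{x\in Q: F(x,u)\subset Q\}$. Elements of $U^n$ are written $\omega=\omega_0\omega_1\cdots\omega_{n-1}$, and $\omega_{[0,i]}=\omega_0\cdots\omega_i$. A set $S\subset U^n$ is an admissible family of length $n$ for $Q$ if (a) $\omega'_0=\omega''_0$ for all $\omega',\omega''\in S$, and (b) there exists $x\in Q$ such that for every $\omega\in S$, with $I^0_\omega(x)=\{x\}$: for all $i=0,1,\dots,n-2$, $F(I^i_\omega(x),\omega_i)\subset\bigcup_{\omega'\in S,\ \omega'_{[0,i]}=\omega_{[0,i]}}Q_{\omega'_{i+1}}$ and $I^{i+1}_\omega(x):=F(I^i_\omega(x),\omega_i)\cap Q_{\omega_{i+1}}\neq\emptyset$; and $I^n_\omega(x):=F(I^{n-1}_\omega(x),\omega_{n-1})\subset Q$. Let $AF^n(Q)$ be the set of admissible families of length $n$ for $Q$, and for $S\in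 AF^n(Q)$ let $Q_S$ be the set of all $x\in Q$ satisfying (b). For nonempty $K\subset Q$, a set $\mathscr{S}\subset U^n$ is $(n,K,Q)$-spanning if $K\subset\bigcup_{S\subset\mathscr{S},\,S\in AF^n(Q)}Q_S$. Let $r_{inv}(n,K,Q)=\inf\{\sharp\mathscr{S}:\mathscr{S}\text{ is }(n,K,Q)\text{-spanning}\}$ (with $\inf\emptyset=\infty$), and the invariance entropy $h_{inv}(K,Q)=\limsup_{n\to\infty}\frac1n\log r_{inv}(n,K,Q)$, where $\log$ is base $2$. *)

theory Defs
  imports Complex_Main "HOL-Library.Extended_Nat" "HOL-Library.Extended_Real"
    "HOL-Library.Liminf_Limsup"
begin

definition is_system :: "'x set \<Rightarrow> 'u set \<Rightarrow> ('x \<Rightarrow> 'u \<Rightarrow> 'x set) \<Rightarrow> bool" where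
  "is_system X U F \<longleftrightarrow> X \<noteq> {} \<and> U \<noteq> {} \<and>
     (\<forall>x\<in>X. \<forall>u\<in>U. F x u \<noteq> {} \<and> F x u \<subseteq> X)"

definition Fimg :: "('x \<Rightarrow> 'u \<Rightarrow> 'x set) \<Rightarrow> 'x set \<Rightarrow> 'u \<Rightarrow> 'x set" where
  "Fimg F A u = (\<Union>x\<in>A. F x u)"

definition controlled_invariant :: "'u set \<Rightarrow> ('x \<Rightarrow> 'u \<Rightarrow> 'x set) \<Rightarrow> 'x set \<Rightarrow> bool" where
  "controlled_invariant U F Q \<longleftrightarrow> (\<forall>x\<in>Q. \<exists>u\<in>U. F x u \<subseteq> Q)"

definition Qu :: "('x \<Rightarrow> 'u \<Rightarrow> 'x set) \<Rightarrow> 'x set \<Rightarrow> 'u \<Rightarrow> 'x set" where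
  "Qu F Q u = {x\<in>Q. F x u \<subseteq> Q}"

text \<open>Words of length n over U are lists; \<open>\<omega> ! i\<close> is \<open>\<omega>_i\<close>, \<open>take (i+1) \<omega>\<close> is \<open>\<omega>_[0,i]\<close>.\<close>
definition words :: "'u set \<Rightarrow> nat \<Rightarrow> 'u list set" where
  "words U n = {\<omega>. length \<omega> = n \<and> set \<omega> \<subseteq> U}"

fun Iset :: "('x \<Rightarrow> 'u \<Rightarrow> 'x set) \<Rightarrow> 'x set \<Rightarrow> 'u list \<Rightarrow> 'x \<Rightarrow> nat \<Rightarrow> 'x set" where
  "Iset F Q \<omega> x 0 = {x}"
| "Iset F Q \<omega> x (Suc i) =
     (if Suc i < length \<omega> then Fimg F (Iset F Q \<omega> x i) (\<omega> ! i) \<inter> Qu F Q (\<omega> ! Suc i)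
      else Fimg F (Iset F Q \<omega> x i) (\<omega> ! i))"

definition adm_point :: "('x \<Rightarrow> 'u \<Rightarrow> 'x set) \<Rightarrow> 'x set \<Rightarrow> nat \<Rightarrow> 'u list set \<Rightarrow> 'x \<Rightarrow> bool" where
  "adm_point F Q n S x \<longleftrightarrow> x \<in> Q \<and>
    (\<forall>\<omega>\<in>S.
       (\<forall>i. Suc i < n \<longrightarrow>
          Fimg F (Iset F Q \<omega> x i) (\<omega> ! i)
            \<subseteq> (\<Union>\<omega>'\<in>{\<omega>'\<in>S. take (Suc i) \<omega>' = take (Suc i) \<omega>}. Qu F Q (\<omega>' ! Suc i))
          \<and> Iset F Q \<omega> x (Suc i) \<noteq> {})
       \<and> Iset F Q \<omega> x n \<subseteq> Q)"

definition AF :: "'u set \<Rightarrow> ('x \<Rightarrow> 'u \<Rightarrow> 'x set) \<Rightarrow> 'x set \<Rightarrow> nat \<Rightarrow> 'u list set set" where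
  "AF U F Q n = {S. S \<noteq> {} \<and> S \<subseteq> words U n
       \<and> (\<forall>\<omega>'\<in>S. \<forall>\<omega>''\<in>S. \<omega>' ! 0 = \<omega>'' ! 0)
       \<and> (\<exists>x\<in>Q. adm_point F Q n S x)}"

definition QS :: "('x \<Rightarrow> 'u \<Rightarrow> 'x set) \<Rightarrow> 'x set \<Rightarrow> nat \<Rightarrow> 'u list set \<Rightarrow> 'x set" where
  "QS F Q n S = {x\<in>Q. adm_point F Q n S x}"

definition spanning :: "'u set \<Rightarrow> ('x \<Rightarrow> 'u \<Rightarrow> 'x set) \<Rightarrow> nat \<Rightarrow> 'x set \<Rightarrow> 'x set \<Rightarrow> 'u list set \<Rightarrow> bool" where
  "spanning U F n K Q SS \<longleftrightarrow> SS \<subseteq> words U n \<and>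
     K \<subseteq> (\<Union>S\<in>{S. S \<subseteq> SS \<and> S \<in> AF U F Q n}. QS F Q n S)"

definition ecard :: "'a set \<Rightarrow> enat" where
  "ecard A = (if finite A then enat (card A) else \<infinity>)"

text \<open>Inf over the empty set is \<infinity> in enat.\<close>
definition r_inv :: "'u set \<Rightarrow> ('x \<Rightarrow> 'u \<Rightarrow> 'x set) \<Rightarrow> nat \<Rightarrow> 'x set \<Rightarrow> 'x set \<Rightarrow> enat" where
  "r_inv U F n K Q = Inf (ecard ` {SS. spanning U F n K Q SS})"

definition elog2 :: "enat \<Rightarrow> ereal" where
  "elog2 r = (case r of \<infinity> \<Rightarrow> \<infinity> | enat k \<Rightarrow> (if k = 0 then -\<infinity> else ereal (log 2 (real k))))"

definition h_inv :: "'u set \<Rightarrow> ('x \<Rightarrow> 'u \<Rightarrow> 'x set) \<Rightarrow> 'x set \<Rightarrow> 'x set \<Rightarrow> ereal" where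
  "h_inv U F K Q = limsup (\<lambda>n. ereal (1 / real n) * elog2 (r_inv U F n K Q))"

end

theory Submission
  imports Defs
begin

lemma span_mono: "K' \<subseteq> K \<Longrightarrow> spanning U F n K Q SS \<Longrightarrow> spanning U F n K' Q SS"
  unfolding spanning_def by blast

lemma r_inv_mono: assumes "K' \<subseteq> K" shows "r_inv U F n K' Q \<le> r_inv U F n K Q"
proof -
  have "{SS. spanning U F n K Q SS} \<subseteq> {SS. spanning U F n K' Q SS}"
    using span_mono[OF assms] by blast
  then show ?thesis unfolding r_inv_def by (intro Inf_superset_mono image_mono)
qed

lemma span_Un: assumes a: "spanning U F n A Q S1" and b: "spanning U F n B Q S2"
  shows "spanning U F n (A \<union> B) Q (S1 \<union> S2)"
proof -
  have "(\<Union>S\<in>{S. S \<subseteq> S1 \<and> S \<in> AF U F Q n}. QS F Q n S) \<subseteq> (\<Union>S\<in>{S. S \<subseteq> S1 \<union> S2 \<and> S \<in> AF U F Q n}. QS F Q n S)"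
    by (rule SUP_subset_mono) auto
  moreover have "(\<Union>S\<in>{S. S \<subseteq> S2 \<and> S \<in> AF U F Q n}. QS F Q n S) \<subseteq> (\<Union>S\<in>{S. S \<subseteq> S1 \<union> S2 \<and> S \<in> AF U F Q n}. QS F Q n S)"
    by (rule SUP_subset_mono) auto
  ultimately show ?thesis using a b unfolding spanning_def by (meson Un_least order_trans)
qed

lemma ecard_Un: "ecard (A \<union> B) \<le> ecard A + ecard B"
  unfolding ecard_def using card_Un_le[of A B] by auto

lemma r_inv_attained:
  assumes "r_inv U F n K Q \<noteq> \<infinity>"
  shows "\<exists>SS. spanning U F n K Q SS \<and> ecard SS = r_inv U F n K Q"
proof -
  have ne: "{SS. spanning U F n K Q SS} \<noteq> {}"
    using assms unfolding r_inv_def by (metis Inf_empty image_empty top_enat_def)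
  then obtain S0 where "S0 \<in> {SS. spanning U F n K Q SS}" by blast
  then have "ecard S0 \<in> ecard ` {SS. spanning U F n K Q SS}" by blast
  from wellorder_InfI[OF this] show ?thesis unfolding r_inv_def by auto
qed

lemma r_inv_Un: "r_inv U F n (A \<union> B) Q \<le> r_inv U F n A Q + r_inv U F n B Q"
proof (cases "r_inv U F n A Q = \<infinity> \<or> r_inv U F n B Q = \<infinity>")
  case True then show ?thesis by auto
next
  case False
  then obtain S1 S2 where s1: "spanning U F n A Q S1" "ecard S1 = r_inv U F n A Q"
    and s2: "spanning U F n B Q S2" "ecard S2 = r_inv U F n B Q"
    using r_inv_attained by metis
  have "r_inv U F n (A \<union> B) Q \<le> ecard (S1 \<union> S2)"
    unfolding r_inv_def using span_Un[OF s1(1) s2(1)] by (auto intro: Inf_lower)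
  also have "\<dots> \<le> r_inv U F n A Q + r_inv U F n B Q" using ecard_Un s1 s2 by metis
  finally show ?thesis .
qed

lemma r_inv_empty: "r_inv (U::'u set) F n {} Q = 0"
proof -
  have sp: "spanning U F n {} Q {}" unfolding spanning_def by auto
  have "ecard ({}::'u list set) \<in> ecard ` {SS. spanning U F n {} Q SS}" by (rule imageI) (simp add: sp)
  then have "r_inv U F n {} Q \<le> ecard ({}::'u list set)" unfolding r_inv_def by (rule Inf_lower)
  then show ?thesis by (simp add: ecard_def flip: zero_enat_def)
qed

lemma r_inv_UN: "finite I \<Longrightarrow> r_inv U F n (\<Union>i\<in>I. Ks i) Q \<le> (\<Sum>i\<in>I. r_inv U F n (Ks i) Q)"
proof (induction I rule: finite_induct)
  case empty then show ?case by (simp add: r_inv_empty)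
next
  case (insert a I)
  have "r_inv U F n (\<Union>i\<in>insert a I. Ks i) Q = r_inv U F n (Ks a \<union> (\<Union>i\<in>I. Ks i)) Q" by simp
  also have "\<dots> \<le> r_inv U F n (Ks a) Q + r_inv U F n (\<Union>i\<in>I. Ks i) Q" by (rule r_inv_Un)
  also have "\<dots> \<le> r_inv U F n (Ks a) Q + (\<Sum>i\<in>I. r_inv U F n (Ks i) Q)"
    using insert.IH by (simp add: add_left_mono)
  finally show ?case using insert by simp
qed

lemma r_inv_pos:
  assumes "K \<noteq> {}" shows "1 \<le> r_inv U F n K Q"
  unfolding r_inv_def
proof (rule Inf_greatest)
  fix r assume "r \<in> ecard ` {SS. spanning U F n K Q SS}"
  then obtain SS where sp: "spanning U F n K Q SS" and r: "r = ecard SS" by blast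
  obtain x where "x \<in> K" using assms by blast
  with sp obtain S where "S \<subseteq> SS" "S \<in> AF U F Q n" unfolding spanning_def by blast
  then have "SS \<noteq> {}" unfolding AF_def by blast
  then show "1 \<le> r" unfolding r ecard_def
    by (auto simp: one_enat_def Suc_le_eq card_gt_0_iff)
qed

lemma elog2_mono: "a \<le> b \<Longrightarrow> elog2 a \<le> elog2 b"
  unfolding elog2_def by (cases a; cases b) auto

lemma enat_sum: "finite I \<Longrightarrow> (\<Sum>i\<in>I. enat (f i)) = enat (\<Sum>i\<in>I. f i)"
  by (induction I rule: finite_induct) (auto simp: zero_enat_def)

theorem proposition2p7:
  fixes X :: "'x set" and U :: "'u set" and F :: "'x \<Rightarrow> 'u \<Rightarrow> 'x set"
    and Q K :: "'x set" and Ks :: "nat \<Rightarrow> 'x set" and m :: nat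
  assumes "is_system X U F"
    and "Q \<subseteq> X"
    and "controlled_invariant U F Q"
    and "K \<subseteq> Q"
    and "m \<ge> 1"
    and "K = (\<Union>i\<in>{1..m}. Ks i)"
    and "\<forall>i\<in>{1..m}. Ks i \<noteq> {}"
  shows "h_inv U F K Q = Max ((\<lambda>i. h_inv U F (Ks i) Q) ` {1..m})"
proof -
  define g where "g = (\<lambda>A n. ereal (1 / real n) * elog2 (r_inv U F n A Q))"
  have hdef: "\<And>A. h_inv U F A Q = limsup (g A)" unfolding h_inv_def g_def by simp
  define M where "M = Max ((\<lambda>i. h_inv U F (Ks i) Q) ` {1..m})"
  have fin: "finite {1..m}" and ne: "{1..m} \<noteq> {}" using assms(5) by auto
  have low: "h_inv U F (Ks i) Q \<le> h_inv U F K Q" if "i \<in> {1..m}" for i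
  proof -
    have sub: "Ks i \<subseteq> K" using assms(6) that by blast
    show ?thesis unfolding hdef g_def
      by (rule Limsup_mono, rule always_eventually, intro allI ereal_mult_left_mono elog2_mono r_inv_mono[OF sub]) simp
  qed
  have "M \<le> h_inv U F K Q" unfolding M_def using fin ne low by (auto intro!: Max.boundedI)
  moreover have "h_inv U F K Q \<le> M"
    unfolding hdef
  proof (subst Limsup_le_iff, intro allI impI)
    fix y assume "M < y"
    then obtain z1 where z1: "M < ereal z1" "ereal z1 < y" using ereal_dense2 by blast
    then obtain z2 where z2: "ereal z1 < ereal z2" "ereal z2 < y" using ereal_dense2 by blast
    define eps where "eps = z2 - z1"
    have eps: "eps > 0" using z2 unfolding eps_def by simp
    have evi: "\<forall>i\<in>{1..m}. eventually (\<lambda>n. g (Ks i) n < ereal z1) sequentially"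
    proof
      fix i assume i: "i \<in> {1..m}"
      have "h_inv U F (Ks i) Q \<le> M" unfolding M_def using fin i by (intro Max_ge) auto
      then have lt: "limsup (g (Ks i)) < ereal z1" using z1(1) hdef[of "Ks i"] by (metis order.strict_trans1)
      have "\<forall>y > limsup (g (Ks i)). eventually (\<lambda>n. y > g (Ks i) n) sequentially"
        by (rule Limsup_le_iff[THEN iffD1, OF order_refl])
      with lt show "eventually (\<lambda>n. g (Ks i) n < ereal z1) sequentially" by blast
    qed
    have ev1: "eventually (\<lambda>n. \<forall>i\<in>{1..m}. g (Ks i) n < ereal z1) sequentially"
      by (rule eventually_ball_finite[OF fin evi])
    have "(\<lambda>n. log 2 (real m) / real n) \<longlonglongrightarrow> 0" by (rule lim_const_over_n)
    then have ev2: "eventually (\<lambda>n. log 2 (real m) / real n < eps) sequentially"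
      using eps by (rule order_tendstoD(2))
    have ev3: "eventually (\<lambda>n. n \<ge> 1) sequentially" by (rule eventually_ge_at_top)
    show "eventually (\<lambda>n. y > g K n) sequentially"
      using ev1 ev2 ev3
    proof eventually_elim
      case (elim n)
      have npos: "real n > 0" using elim(3) by simp
      define k where "k i = the_enat (r_inv U F n (Ks i) Q)" for i
      have rk: "r_inv U F n (Ks i) Q = enat (k i) \<and> k i \<ge> 1" if i: "i \<in> {1..m}" for i
      proof -
        have pos: "1 \<le> r_inv U F n (Ks i) Q" using assms(7) i by (intro r_inv_pos) auto
        have lt: "g (Ks i) n < ereal z1" using elim(1) i by auto
        have ninf: "r_inv U F n (Ks i) Q \<noteq> \<infinity>"
        proof
          assume "r_inv U F n (Ks i) Q = \<infinity>"
          then have "g (Ks i) n = \<infinity>" using npos unfolding g_def elog2_def by simp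
          with lt show False by simp
        qed
        then have e: "r_inv U F n (Ks i) Q = enat (k i)" unfolding k_def by auto
        have k1: "k i \<ge> 1" using pos e by (simp add: one_enat_def)
        with e show ?thesis by simp
      qed
      define kmax where "kmax = Max (k ` {1..m})"
      have "kmax \<in> k ` {1..m}" unfolding kmax_def using fin ne by (intro Max_in) auto
      then obtain i0 where i0: "i0 \<in> {1..m}" "k i0 = kmax" by auto
      have kle: "k i \<le> kmax" if "i \<in> {1..m}" for i
        unfolding kmax_def using fin that by auto
      have lti0: "log 2 (real kmax) / real n < z1"
      proof -
        have lt: "g (Ks i0) n < ereal z1" using elim(1) i0 by blast
        have "g (Ks i0) n = ereal (log 2 (real kmax) / real n)"
          unfolding g_def elog2_def using rk[OF i0(1)] i0(2) by simp
        with lt show ?thesis by simp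
      qed
      have "r_inv U F n K Q \<le> (\<Sum>i\<in>{1..m}. r_inv U F n (Ks i) Q)"
        unfolding assms(6) using r_inv_UN fin by blast
      also have "\<dots> = (\<Sum>i\<in>{1..m}. enat (k i))" using rk by (intro sum.cong) auto
      also have "\<dots> = enat (\<Sum>i\<in>{1..m}. k i)" using enat_sum fin by blast
      also have "(\<Sum>i\<in>{1..m}. k i) \<le> m * kmax"
        using sum_bounded_above[of "{1..m}" k kmax] kle by simp
      finally have rK: "r_inv U F n K Q \<le> enat (m * kmax)" by simp
      have "Ks 1 \<subseteq> K" using assms(5,6) by auto
      then have "K \<noteq> {}" using assms(5,7) by auto
      then have pK: "1 \<le> r_inv U F n K Q" by (rule r_inv_pos)
      obtain kK where kK: "r_inv U F n K Q = enat kK" using rK by (cases "r_inv U F n K Q") auto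
      have kK1: "1 \<le> kK" using pK kK by (simp add: one_enat_def)
      have kKle: "kK \<le> m * kmax" using rK kK by simp
      have km: "kmax \<ge> 1" using rk[OF i0(1)] i0(2) by simp
      have rl: "real kK \<le> real (m * kmax)" using kKle by (simp only: of_nat_le_iff)
      have "log 2 (real kK) \<le> log 2 (real (m * kmax))"
        using kK1 rl by (subst log_le_cancel_iff) auto
      also have "\<dots> = log 2 (real m) + log 2 (real kmax)"
        using km assms(5) by (simp add: log_mult)
      finally have "log 2 (real kK) / real n \<le> log 2 (real m) / real n + log 2 (real kmax) / real n"
        using npos by (simp only: add_divide_distrib[symmetric]) (rule divide_right_mono, auto)
      also have "\<dots> < eps + z1" using elim(2) lti0 by simp
      finally have "log 2 (real kK) / real n < z2" unfolding eps_def by simp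
      moreover have "g K n = ereal (log 2 (real kK) / real n)"
        unfolding g_def elog2_def kK using kK1 by simp
      ultimately show ?case using z2 by (metis less_ereal.simps(1) order.strict_trans)
    qed
  qed
  ultimately show ?thesis unfolding M_def by simp
qed

end
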